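(* There exists no $\mathbb{N}$-rational sequence $x_1, x_2, \dots$ such that $x_{8n+1} > x_{9n+2}$ for all $n \geq 1$.
   Context: $\mathbb{N}=\{0,1,2,\dots\}$. A sequence $x_1, x_2, \dots \in \mathbb{N}$ is called $\mathbb{N}$-rational if there exist a dimension $d \geq 1$, a matrix $M \in \mathbb{N}^{d\times d}$ and vectors $v, w \in \mathbb{N}^d$ such that $x_n = v^{\top} M^n w$ for all $n \geq 1$. *)

theory Defs
  imports Main
begin

text \<open>Square matrices of dimension d over the naturals are represented as functions
  nat \<Rightarrow> nat \<Rightarrow> nat, only the entries with indices below d being relevant;
  vectors of dimension d as functions nat \<Rightarrow> nat, entries below d relevant.\<close>

definition mat_mult_nat :: "nat \<Rightarrow> (nat \<Rightarrow> nat \<Rightarrow> nat) \<Rightarrow> (nat \<Rightarrow> nat \<Rightarrow> nat) \<Rightarrow> (nat \<Rightarrow> nat \<Rightarrow> nat)" where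
  "mat_mult_nat d A B = (\<lambda>i j. \<Sum>k<d. A i k * B k j)"

definition mat_id_nat :: "nat \<Rightarrow> nat \<Rightarrow> nat" where
  "mat_id_nat = (\<lambda>i j. if i = j then 1 else 0)"

fun mat_pow_nat :: "nat \<Rightarrow> (nat \<Rightarrow> nat \<Rightarrow> nat) \<Rightarrow> nat \<Rightarrow> (nat \<Rightarrow> nat \<Rightarrow> nat)" where
  "mat_pow_nat d M 0 = mat_id_nat"
| "mat_pow_nat d M (Suc n) = mat_mult_nat d (mat_pow_nat d M n) M"

definition bilin_pow :: "nat \<Rightarrow> (nat \<Rightarrow> nat) \<Rightarrow> (nat \<Rightarrow> nat \<Rightarrow> nat) \<Rightarrow> (nat \<Rightarrow> nat) \<Rightarrow> nat \<Rightarrow> nat" where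
  "bilin_pow d v M w n = (\<Sum>i<d. \<Sum>j<d. v i * mat_pow_nat d M n i j * w j)"

text \<open>A sequence x (indexed from 1; the value x 0 is irrelevant) is N-rational.\<close>
definition N_rational :: "(nat \<Rightarrow> nat) \<Rightarrow> bool" where
  "N_rational x \<longleftrightarrow> (\<exists>d M v w. d \<ge> 1 \<and> (\<forall>n\<ge>1. x n = bilin_pow d v M w n))"

end

theory Submission
  imports Defs
begin

abbreviation P where "P d M \<equiv> mat_pow_nat d M"

lemma swap_lemma:
  fixes a :: "nat \<Rightarrow> nat"
  shows "(\<Sum>k<d. (\<Sum>l<d. a l * b l k) * c k) = (\<Sum>l<d. a l * (\<Sum>k<(d::nat). b l k * c k))"
proof -
  have "(\<Sum>k<d. (\<Sum>l<d. a l * b l k) * c k) = (\<Sum>k<d. \<Sum>l<d. a l * (b l k * c k))"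
    by (simp add: sum_distrib_right mult.assoc)
  also have "\<dots> = (\<Sum>l<d. \<Sum>k<d. a l * (b l k * c k))" by (rule sum.swap)
  also have "\<dots> = (\<Sum>l<d. a l * (\<Sum>k<(d::nat). b l k * c k))" by (simp add: sum_distrib_left)
  finally show ?thesis .
qed

lemma pow_add:
  assumes "i<d" "j<d"
  shows "P d M (x+y) i j = (\<Sum>k<d. P d M x i k * P d M y k j)"
  using assms(2)
proof (induction y arbitrary: j)
  case 0
  have "(\<Sum>k<d. P d M x i k * mat_id_nat k j) = (\<Sum>k<d. if k = j then P d M x i k else 0)"
    by (rule sum.cong) (auto simp: mat_id_nat_def)
  also have "\<dots> = P d M x i j" using 0 by (simp add: sum.delta')
  finally show ?case by simp
next
  case (Suc y)
  have "P d M (x + Suc y) i j = (\<Sum>k<d. P d M (x+y) i k * M k j)"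
    by (simp add: mat_mult_nat_def)
  also have "\<dots> = (\<Sum>k<d. (\<Sum>l<d. P d M x i l * P d M y l k) * M k j)"
    using Suc.IH by (intro sum.cong) auto
  also have "\<dots> = (\<Sum>l<d. P d M x i l * (\<Sum>k<d. P d M y l k * M k j))"
    by (simp only: swap_lemma)
  also have "\<dots> = (\<Sum>l<d. P d M x i l * P d M (Suc y) l j)"
    by (simp add: mat_mult_nat_def)
  finally show ?case .
qed

lemma pow_one: "i<d \<Longrightarrow> P d M 1 i j = M i j"
proof -
  assume i: "i<d"
  have "P d M 1 i j = (\<Sum>k<d. mat_id_nat i k * M k j)" by (simp add: mat_mult_nat_def)
  also have "\<dots> = (\<Sum>k<d. if k = i then M k j else 0)"
    by (rule sum.cong) (auto simp: mat_id_nat_def)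
  also have "\<dots> = M i j" using i by (simp add: sum.delta')
  finally show ?thesis .
qed

definition uvec where "uvec d M w L a = (\<Sum>j<d. P d M L a j * w j)"

lemma uvec_add: "a<d \<Longrightarrow> uvec d M w (x+L) a = (\<Sum>b<d. P d M x a b * uvec d M w L b)"
proof -
  assume a: "a<d"
  have "uvec d M w (x+L) a = (\<Sum>j<d. (\<Sum>b<d. P d M x a b * P d M L b j) * w j)"
    unfolding uvec_def using a by (intro sum.cong) (auto simp: pow_add)
  also have "\<dots> = (\<Sum>b<d. P d M x a b * uvec d M w L b)"
    unfolding uvec_def
    by (simp only: swap_lemma)
  finally show ?thesis .
qed

lemma uvec_suc: "a<d \<Longrightarrow> uvec d M w (Suc L) a = (\<Sum>b<d. M a b * uvec d M w L b)"
proof -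
  assume a: "a<d"
  have "uvec d M w (Suc L) a = uvec d M w (1+L) a" by simp
  also have "\<dots> = (\<Sum>b<d. P d M 1 a b * uvec d M w L b)" using uvec_add[OF a] by blast
  also have "\<dots> = (\<Sum>b<d. M a b * uvec d M w L b)" using pow_one[OF a] by simp
  finally show ?thesis .
qed

lemma pow_mul_ge: "a<d \<Longrightarrow> P d M x a a * P d M y a a \<le> P d M (x+y) a a"
proof -
  assume a: "a<d"
  have "P d M x a a * P d M y a a \<le> (\<Sum>k<d. P d M x a k * P d M y k a)"
    using a by (intro member_le_sum) auto
  then show ?thesis using pow_add[OF a a] by simp
qed

lemma pow_rep: "a<d \<Longrightarrow> P d M c a a > 0 \<Longrightarrow> P d M (c*r) a a > 0"
proof (induction r)
  case 0 then show ?case by (simp add: mat_id_nat_def)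
next
  case (Suc r)
  have "0 < P d M c a a * P d M (c*r) a a" using Suc by simp
  also have "\<dots> \<le> P d M (c + c*r) a a" by (rule pow_mul_ge[OF Suc.prems(1)])
  finally show ?case by simp
qed

definition Sset where "Sset d M = {a. \<exists>c. 1\<le>c \<and> c\<le>d \<and> P d M c a a > 0}"

fun good :: "nat \<Rightarrow> (nat\<Rightarrow>nat\<Rightarrow>nat) \<Rightarrow> nat \<Rightarrow> nat \<Rightarrow> bool" where
  "good d M 0 a = (a \<in> Sset d M)"
| "good d M (Suc k) a = (a \<in> Sset d M \<or> (\<forall>b<d. M a b > 0 \<longrightarrow> good d M k b))"

lemma S_pow: assumes "a \<in> Sset d M" "a<d" "\<And>c. 1\<le>c \<Longrightarrow> c\<le>d \<Longrightarrow> c dvd m"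
  shows "P d M m a a > 0"
proof -
  obtain c where c: "1\<le>c" "c\<le>d" "P d M c a a > 0" using assms(1) unfolding Sset_def by auto
  obtain r where "m = c*r" using assms(3)[OF c(1,2)] by (auto elim: dvdE)
  then show ?thesis using pow_rep[OF assms(2) c(3)] by simp
qed

lemma good_mono:
  assumes "good d M k a" "a<d" "k \<le> L" "\<And>c. 1\<le>c \<Longrightarrow> c\<le>d \<Longrightarrow> c dvd m"
  shows "uvec d M w L a \<le> uvec d M w (L+m) a"
  using assms(1-3)
proof (induction k arbitrary: a L)
  case 0
  have "uvec d M w L a \<le> P d M m a a * uvec d M w L a"
    using S_pow[of a d M m] 0 assms(4) by simp
  also have "\<dots> \<le> (\<Sum>b<d. P d M m a b * uvec d M w L b)"
    using 0 by (intro member_le_sum) auto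
  also have "\<dots> = uvec d M w (m+L) a" using uvec_add 0 by metis
  finally show ?case by (simp add: add.commute)
next
  case (Suc k)
  show ?case
  proof (cases "a \<in> Sset d M")
    case True
    have "uvec d M w L a \<le> P d M m a a * uvec d M w L a"
      using S_pow[of a d M m] True Suc.prems assms(4) by simp
    also have "\<dots> \<le> (\<Sum>b<d. P d M m a b * uvec d M w L b)"
      using Suc.prems by (intro member_le_sum) auto
    also have "\<dots> = uvec d M w (m+L) a" using uvec_add Suc.prems by metis
    finally show ?thesis by (simp add: add.commute)
  next
    case False
    then have g: "\<forall>b<d. M a b > 0 \<longrightarrow> good d M k b" using Suc.prems by simp
    obtain L' where L: "L = Suc L'" "k \<le> L'" using Suc.prems by (cases L) auto
    have "uvec d M w L a = (\<Sum>b<d. M a b * uvec d M w L' b)" using L uvec_suc Suc.prems by metis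
    also have "\<dots> \<le> (\<Sum>b<d. M a b * uvec d M w (L'+m) b)"
    proof (rule sum_mono)
      fix b assume b: "b \<in> {..<d}"
      show "M a b * uvec d M w L' b \<le> M a b * uvec d M w (L'+m) b"
      proof (cases "M a b = 0")
        case False
        then show ?thesis using g b Suc.IH[of b L'] L by simp
      qed simp
    qed
    also have "\<dots> = uvec d M w (Suc (L'+m)) a" using uvec_suc Suc.prems by metis
    finally show ?thesis using L by simp
  qed
qed

lemma walk_pos:
  "(\<forall>i<c. M (f (s+i)) (f (s+i+1)) > 0) \<Longrightarrow> (\<forall>i\<le>c. f (s+i) < d) \<Longrightarrow> P d M c (f s) (f (s+c)) > 0"
proof (induction c)
  case 0 then show ?case by (simp add: mat_id_nat_def)
next
  case (Suc c)
  have a: "0 < P d M c (f s) (f (s+c))" using Suc by simp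
  have b: "0 < M (f (s+c)) (f (s + Suc c))" using Suc.prems(1) by auto
  have "0 < P d M c (f s) (f (s+c)) * M (f (s+c)) (f (s + Suc c))" using a b by simp
  also have "\<dots> \<le> (\<Sum>k<d. P d M c (f s) k * M k (f (s + Suc c)))"
    using Suc.prems(2) by (intro member_le_sum) auto
  finally show ?case by (simp add: mat_mult_nat_def)
qed

lemma bad_walk:
  "a < d \<Longrightarrow> \<not> good d M k a \<Longrightarrow> \<exists>f. f 0 = a \<and> (\<forall>i\<le>k. f i \<notin> Sset d M \<and> f i < d) \<and> (\<forall>i<k. M (f i) (f (Suc i)) > 0)"
proof (induction k arbitrary: a)
  case 0 then show ?case by (intro exI[of _ "\<lambda>_. a"]) auto
next
  case (Suc k)
  then obtain b where b: "b<d" "M a b > 0" "\<not> good d M k b" and aS: "a \<notin> Sset d M" by auto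
  obtain g where g: "g 0 = b" "\<forall>i\<le>k. g i \<notin> Sset d M \<and> g i < d" "\<forall>i<k. M (g i) (g (Suc i)) > 0"
    using Suc.IH[OF b(1) b(3)] by blast
  let ?f = "\<lambda>i. case i of 0 \<Rightarrow> a | Suc j \<Rightarrow> g j"
  have "\<forall>i\<le>Suc k. ?f i \<notin> Sset d M \<and> ?f i < d"
  proof (intro allI impI)
    fix i assume "i \<le> Suc k" then show "?f i \<notin> Sset d M \<and> ?f i < d"
      using g aS Suc.prems by (cases i) auto
  qed
  moreover have "\<forall>i<Suc k. M (?f i) (?f (Suc i)) > 0"
  proof (intro allI impI)
    fix i assume "i < Suc k" then show "M (?f i) (?f (Suc i)) > 0"
      using g b by (cases i) auto
  qed
  ultimately show ?case by (intro exI[of _ ?f]) auto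
qed

lemma all_good: assumes "a<d" shows "good d M d a"
proof (rule ccontr)
  assume "\<not> good d M d a"
  then obtain f where f: "f 0 = a" "\<forall>i\<le>d. f i \<notin> Sset d M \<and> f i < d" "\<forall>i<d. M (f i) (f (Suc i)) > 0"
    using bad_walk[OF assms] by blast
  have sub: "f ` {..d} \<subseteq> {..<d}" using f(2) by auto
  have "\<not> inj_on f {..d}"
  proof
    assume "inj_on f {..d}"
    then have "card (f ` {..d}) = Suc d" by (simp add: card_image)
    moreover have "card (f ` {..d}) \<le> d" using card_mono[OF _ sub] by simp
    ultimately show False by simp
  qed
  then obtain i j where ij: "i \<le> d" "j \<le> d" "i \<noteq> j" "f i = f j" unfolding inj_on_def by auto
  have "\<exists>i j. i < j \<and> j \<le> d \<and> f i = f j"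
  proof (cases "i < j")
    case True then show ?thesis using ij by auto
  next
    case False then show ?thesis using ij by (intro exI[of _ j] exI[of _ i]) auto
  qed
  then obtain i j where ij: "i < j" "j \<le> d" "f i = f j" by blast
  have "P d M (j-i) (f i) (f (i + (j-i))) > 0"
    using f ij by (intro walk_pos) auto
  then have "P d M (j-i) (f i) (f i) > 0" using ij by simp
  then have "f i \<in> Sset d M" using ij unfolding Sset_def by (intro CollectI exI[of _ "j-i"]) auto
  then show False using f(2) ij by auto
qed

lemma bilin_uvec: "bilin_pow d v M w L = (\<Sum>i<d. v i * uvec d M w L i)"
  unfolding bilin_pow_def uvec_def by (simp add: sum_distrib_left mult.assoc)

theorem mainTheorem1:
  shows "\<not> (\<exists>x. N_rational x \<and> (\<forall>n\<ge>1. x (8*n+1) > x (9*n+2)))"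
proof
  assume "\<exists>x. N_rational x \<and> (\<forall>n\<ge>1. x (8*n+1) > x (9*n+2))"
  then obtain x d M v w where d: "d \<ge> 1" and xe: "\<forall>n\<ge>1. x n = bilin_pow d v M w n"
    and gt: "\<forall>n\<ge>1. x (8*n+1) > x (9*n+2)" unfolding N_rational_def by blast
  define m where "m = fact d * (d+2)"
  have fpos: "fact d \<ge> (1::nat)" by (simp add: Suc_leI)
  have mge: "m \<ge> d+2" unfolding m_def using mult_right_mono[OF fpos, of "d+2"] by simp
  define n where "n = m - 1"
  have n1: "n \<ge> 1" using mge d unfolding n_def by simp
  have e: "9*n+2 = (8*n+1) + m" using mge unfolding n_def by simp
  have dv: "\<And>c. 1\<le>c \<Longrightarrow> c\<le>d \<Longrightarrow> c dvd m" unfolding m_def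
    by (simp add: dvd_fact)
  have "x (8*n+1) = (\<Sum>i<d. v i * uvec d M w (8*n+1) i)" using xe bilin_uvec by simp
  also have "\<dots> \<le> (\<Sum>i<d. v i * uvec d M w ((8*n+1)+m) i)"
  proof (rule sum_mono)
    fix i assume i: "i \<in> {..<d}"
    have "uvec d M w (8*n+1) i \<le> uvec d M w ((8*n+1)+m) i"
    proof -
      have dl: "d \<le> 8*n+1" using mge unfolding n_def by simp
      show ?thesis using good_mono[OF all_good[of i d M] _ dl dv, of w] i by simp
    qed
    then show "v i * uvec d M w (8*n+1) i \<le> v i * uvec d M w ((8*n+1)+m) i" by simp
  qed
  also have "\<dots> = x (9*n+2)" unfolding e[symmetric] using xe bilin_uvec by simp
  finally show False using gt n1 by (meson leD)
qed

end
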